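(* Let $L\ge2$ be an integer, $\Lambda,\tilde\Lambda\subset\mathbb R^k$, $\Omega,\tilde\Omega\subset\mathbb R^n$, $U,\tilde U\subset\mathbb R^m$ open, with $k\ge m$, and let $f:\Lambda\to\tilde\Lambda$, $g:\Omega\to\tilde\Omega$, $h:U\to\tilde U$ be $C^L$-diffeomorphisms. Let $\Pi:\Lambda\times\Omega\to U$ and define $\tilde\Pi:\tilde\Lambda\times\tilde\Omega\to\tilde U$ by $\tilde\Pi(f(\lambda),g(\omega))=h(\Pi(\lambda,\omega))$. If $\Pi$ is $C^L$-smooth and locally transversal, then $\tilde\Pi$ is $C^L$-smooth and locally transversal.
   Context: Transversality. For a $C^L$ map $\Pi:\Lambda\times\Omega\to\mathbb R^m$ ($\Lambda\subset\mathbb R^k$, $\Omega\subset\mathbb R^n$ open, $k\ge m$), put $\Phi(\lambda,v,w)=\frac{\Pi(\lambda,v)-\Pi(\lambda,w)}{|v-w|}$ for $v\ne w$. $\Pi$ is transversal on $\Lambda\times\Omega$ if there is $C>0$ such that for all $\lambda$ and all $v\neq w$: if $|\Phi(\lambda,v,w)|\le C$ then $|\det(D_\lambda\Phi(\lambda,v,w)\,(D_\lambda\Phi(\lambda,v,w))^{\mathsf T})|\ge C^2$. $\Pi$ is locally transversal if $\Lambda\times\Omega$ can be covered by open sets on each of which the restriction of $\Pi$ is transversal. *)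

theory Defs
  imports "HOL-Analysis.Analysis"
begin

text \<open>C^L smoothness on a set S (used only for open S): C^0 = continuous;
  C^(L+1) = Frechet differentiable at every point of S, and every directional
  derivative x \<mapsto> f'(x) v is C^L on S.\<close>
fun Ck_on :: "nat \<Rightarrow> ('a::real_normed_vector \<Rightarrow> 'b::real_normed_vector) \<Rightarrow> 'a set \<Rightarrow> bool" where
  "Ck_on 0 f S = continuous_on S f"
| "Ck_on (Suc L) f S =
     (\<exists>f'. (\<forall>x\<in>S. (f has_derivative f' x) (at x)) \<and> (\<forall>v. Ck_on L (\<lambda>x. f' x v) S))"

definition Ck_diffeo :: "nat \<Rightarrow> ('a::real_normed_vector \<Rightarrow> 'b::real_normed_vector) \<Rightarrow> 'a set \<Rightarrow> 'b set \<Rightarrow> bool" where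
  "Ck_diffeo L f S T \<longleftrightarrow>
     (\<exists>g. f ` S \<subseteq> T \<and> g ` T \<subseteq> S \<and> (\<forall>x\<in>S. g (f x) = x) \<and> (\<forall>y\<in>T. f (g y) = y)
          \<and> Ck_on L f S \<and> Ck_on L g T)"

definition Phi :: "((real^'k) \<times> (real^'n) \<Rightarrow> real^'m) \<Rightarrow> real^'k \<Rightarrow> real^'n \<Rightarrow> real^'n \<Rightarrow> real^'m"
  where "Phi P l v w = (1 / norm (v - w)) *\<^sub>R (P (l, v) - P (l, w))"

definition transversal_on :: "((real^'k) \<times> (real^'n) \<Rightarrow> real^'m) \<Rightarrow> (real^'k) set \<Rightarrow> (real^'n) set \<Rightarrow> bool" where
  "transversal_on P A B \<longleftrightarrow>
     (\<exists>C>0. \<forall>l\<in>A. \<forall>v\<in>B. \<forall>w\<in>B. v \<noteq> w \<longrightarrow> norm (Phi P l v w) \<le> C \<longrightarrow>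
        \<bar>det (jacobian (\<lambda>l'. Phi P l' v w) (at l) ** transpose (jacobian (\<lambda>l'. Phi P l' v w) (at l)))\<bar> \<ge> C\<^sup>2)"

definition locally_transversal_on :: "((real^'k) \<times> (real^'n) \<Rightarrow> real^'m) \<Rightarrow> (real^'k) set \<Rightarrow> (real^'n) set \<Rightarrow> bool" where
  "locally_transversal_on P A B \<longleftrightarrow>
     (\<forall>p\<in>A \<times> B. \<exists>A' B'. open A' \<and> open B' \<and> p \<in> A' \<times> B' \<and> A' \<subseteq> A \<and> B' \<subseteq> B \<and> transversal_on P A' B')"

end

theory Submission
  imports Defs
begin

lemma lin_repr:
  fixes T :: "'a::euclidean_space \<Rightarrow> 'b::real_vector"
  assumes "linear T" shows "T u = (\<Sum>i\<in>Basis. (u \<bullet> i) *\<^sub>R T i)"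
proof -
  have "T u = T (\<Sum>i\<in>Basis. (u \<bullet> i) *\<^sub>R i)" by (simp add: euclidean_representation)
  also have "\<dots> = (\<Sum>i\<in>Basis. T ((u \<bullet> i) *\<^sub>R i))" by (rule linear_sum[OF assms])
  also have "\<dots> = (\<Sum>i\<in>Basis. (u \<bullet> i) *\<^sub>R T i)" by (simp add: linear_cmul[OF assms])
  finally show ?thesis .
qed

lemma Ck_cont: "Ck_on L f S \<Longrightarrow> continuous_on S f"
proof (induction L arbitrary: f)
  case 0 then show ?case by simp
next
  case (Suc L)
  then obtain f' where "\<forall>x\<in>S. (f has_derivative f' x) (at x)" by auto
  then show ?case
    using continuous_at_imp_continuous_on has_derivative_continuous by blast
qed

lemma Ck_mono: "Ck_on (Suc L) f S \<Longrightarrow> Ck_on L f S"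
proof (induction L arbitrary: f)
  case 0 then show ?case by (metis Ck_cont Ck_on.simps(1))
next
  case (Suc L)
  then obtain f' where "\<forall>x\<in>S. (f has_derivative f' x) (at x)" "\<forall>v. Ck_on (Suc L) (\<lambda>x. f' x v) S"
    by auto
  then show ?case using Suc.IH by auto
qed

lemma Ck_mono_le: "Ck_on L f S \<Longrightarrow> L' \<le> L \<Longrightarrow> Ck_on L' f S"
proof (induction L)
  case 0 then show ?case by simp
next
  case (Suc L) then show ?case using Ck_mono by (metis le_Suc_eq)
qed

lemma Ck_cong: "open S \<Longrightarrow> (\<And>x. x \<in> S \<Longrightarrow> f x = g x) \<Longrightarrow> Ck_on L f S \<Longrightarrow> Ck_on L g S"
proof (induction L arbitrary: f g)
  case 0 then show ?case using continuous_on_cong by (metis Ck_on.simps(1))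
next
  case (Suc L)
  then obtain f' where d: "\<forall>x\<in>S. (f has_derivative f' x) (at x)" "\<forall>v. Ck_on L (\<lambda>x. f' x v) S"
    by auto
  have "\<forall>x\<in>S. (g has_derivative f' x) (at x)"
    using d(1) Suc.prems(1,2) has_derivative_transform_within_open[of f "f' _" _ UNIV S g] by blast
  then show ?case using d(2) by auto
qed

lemma Ck_const: "Ck_on L (\<lambda>x. c) S"
proof (induction L arbitrary: c)
  case 0 then show ?case by simp
next
  case (Suc L)
  have "\<forall>x\<in>S. ((\<lambda>x. c) has_derivative (\<lambda>v. 0)) (at x)" by simp
  then show ?case using Suc.IH by (intro Ck_on.simps(2)[THEN iffD2] exI[of _ "\<lambda>x v. 0"]) auto
qed

lemma Ck_add: "Ck_on L f S \<Longrightarrow> Ck_on L g S \<Longrightarrow> Ck_on L (\<lambda>x. f x + g x) S"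
proof (induction L arbitrary: f g)
  case 0 then show ?case by (simp add: continuous_on_add)
next
  case (Suc L)
  obtain f' where f: "\<forall>x\<in>S. (f has_derivative f' x) (at x)" "\<forall>v. Ck_on L (\<lambda>x. f' x v) S"
    using Suc.prems by auto
  obtain g' where g: "\<forall>x\<in>S. (g has_derivative g' x) (at x)" "\<forall>v. Ck_on L (\<lambda>x. g' x v) S"
    using Suc.prems by auto
  have "\<forall>x\<in>S. ((\<lambda>x. f x + g x) has_derivative (\<lambda>v. f' x v + g' x v)) (at x)"
    using f g by (auto intro: has_derivative_add)
  moreover have "\<forall>v. Ck_on L (\<lambda>x. f' x v + g' x v) S" using f g Suc.IH by auto
  ultimately show ?case by auto
qed

lemma Ck_scaleR: "Ck_on L a S \<Longrightarrow> Ck_on L f S \<Longrightarrow> Ck_on L (\<lambda>x. a x *\<^sub>R f x) S"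
proof (induction L arbitrary: a f)
  case 0 then show ?case by (simp add: continuous_on_scaleR)
next
  case (Suc L)
  obtain f' where f: "\<forall>x\<in>S. (f has_derivative f' x) (at x)" "\<forall>v. Ck_on L (\<lambda>x. f' x v) S"
    using Suc.prems by auto
  obtain a' where a: "\<forall>x\<in>S. (a has_derivative a' x) (at x)" "\<forall>v. Ck_on L (\<lambda>x. a' x v) S"
    using Suc.prems by auto
  have "\<forall>x\<in>S. ((\<lambda>x. a x *\<^sub>R f x) has_derivative (\<lambda>v. a x *\<^sub>R f' x v + a' x v *\<^sub>R f x)) (at x)"
    using f a by (auto intro: has_derivative_scaleR)
  moreover have "\<forall>v. Ck_on L (\<lambda>x. a x *\<^sub>R f' x v + a' x v *\<^sub>R f x) S"
  proof
    fix v
    have "Ck_on L (\<lambda>x. a x *\<^sub>R f' x v) S" using Suc.IH[OF Ck_mono[OF Suc.prems(1)] f(2)[rule_format]] .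
    moreover have "Ck_on L (\<lambda>x. a' x v *\<^sub>R f x) S" using Suc.IH[OF a(2)[rule_format] Ck_mono[OF Suc.prems(2)]] .
    ultimately show "Ck_on L (\<lambda>x. a x *\<^sub>R f' x v + a' x v *\<^sub>R f x) S" by (rule Ck_add)
  qed
  ultimately show ?case by auto
qed

lemma Ck_sum: "finite I \<Longrightarrow> (\<And>i. i \<in> I \<Longrightarrow> Ck_on L (f i) S) \<Longrightarrow> Ck_on L (\<lambda>x. \<Sum>i\<in>I. f i x) S"
proof (induction I rule: finite_induct)
  case empty then show ?case by (simp add: Ck_const)
next
  case (insert i I) then show ?case by (simp add: Ck_add)
qed

lemma Ck_linear: "bounded_linear T \<Longrightarrow> Ck_on L f S \<Longrightarrow> Ck_on L (\<lambda>x. T (f x)) S"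
proof (induction L arbitrary: f)
  case 0 then show ?case
    by (simp add: continuous_on_compose2[of UNIV T] linear_continuous_on)
next
  case (Suc L)
  obtain f' where f: "\<forall>x\<in>S. (f has_derivative f' x) (at x)" "\<forall>v. Ck_on L (\<lambda>x. f' x v) S"
    using Suc.prems by auto
  have "\<forall>x\<in>S. ((\<lambda>x. T (f x)) has_derivative (\<lambda>v. T (f' x v))) (at x)"
    using f Suc.prems(1) by (auto intro: bounded_linear.has_derivative)
  then show ?case using f Suc.IH Suc.prems by auto
qed

lemma Ck_id: "Ck_on L (\<lambda>x. x) S"
proof (cases L)
  case 0 then show ?thesis by (simp add: continuous_on_id)
next
  case (Suc L')
  have "\<forall>x\<in>S. ((\<lambda>x. x) has_derivative (\<lambda>v. v)) (at x)" by simp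
  then show ?thesis unfolding Suc using Ck_const by (intro Ck_on.simps(2)[THEN iffD2] exI[of _ "\<lambda>x v. v"]) auto
qed

lemma Ck_linfun: "bounded_linear T \<Longrightarrow> Ck_on L T S"
  using Ck_linear[OF _ Ck_id] by auto

lemma Ck_pair: "Ck_on L f S \<Longrightarrow> Ck_on L g S \<Longrightarrow> Ck_on L (\<lambda>x. (f x, g x)) S"
proof (induction L arbitrary: f g)
  case 0 then show ?case by (simp add: continuous_on_Pair)
next
  case (Suc L)
  obtain f' where f: "\<forall>x\<in>S. (f has_derivative f' x) (at x)" "\<forall>v. Ck_on L (\<lambda>x. f' x v) S"
    using Suc.prems by auto
  obtain g' where g: "\<forall>x\<in>S. (g has_derivative g' x) (at x)" "\<forall>v. Ck_on L (\<lambda>x. g' x v) S"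
    using Suc.prems by auto
  have "\<forall>x\<in>S. ((\<lambda>x. (f x, g x)) has_derivative (\<lambda>v. (f' x v, g' x v))) (at x)"
    using f g by (auto intro: has_derivative_Pair)
  then show ?case using f g Suc.IH by auto
qed

lemma Ck_compose:
  fixes h :: "'b::euclidean_space \<Rightarrow> 'c::real_normed_vector"
    and F :: "'a::real_normed_vector \<Rightarrow> 'b"
  assumes "open S" "Ck_on L h U" "Ck_on L F S" "F ` S \<subseteq> U"
  shows "Ck_on L (\<lambda>x. h (F x)) S"
  using assms(2-4)
proof (induction L arbitrary: h F)
  case 0 then show ?case by (simp add: continuous_on_compose2)
next
  case (Suc L)
  obtain h' where h: "\<forall>y\<in>U. (h has_derivative h' y) (at y)" "\<forall>v. Ck_on L (\<lambda>y. h' y v) U"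
    using Suc.prems by auto
  obtain F' where F: "\<forall>x\<in>S. (F has_derivative F' x) (at x)" "\<forall>v. Ck_on L (\<lambda>x. F' x v) S"
    using Suc.prems by auto
  have der: "\<forall>x\<in>S. ((\<lambda>x. h (F x)) has_derivative (\<lambda>v. h' (F x) (F' x v))) (at x)"
  proof
    fix x assume x: "x \<in> S"
    have "F x \<in> U" using x Suc.prems by auto
    then show "((\<lambda>x. h (F x)) has_derivative (\<lambda>v. h' (F x) (F' x v))) (at x)"
      using diff_chain_at[OF F(1)[rule_format, OF x] h(1)[rule_format, OF \<open>F x \<in> U\<close>]]
      by (simp add: o_def)
  qed
  have "Ck_on L (\<lambda>x. h' (F x) (F' x v)) S" for v
  proof -
    have eq: "h' (F x) (F' x v) = (\<Sum>i\<in>Basis. (F' x v \<bullet> i) *\<^sub>R h' (F x) i)" if "x \<in> S" for x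
    proof -
      have "linear (h' (F x))" using h(1) that Suc.prems(3)
        by (meson has_derivative_linear image_subset_iff)
      then show ?thesis
        by (rule lin_repr)
    qed
    have "Ck_on L (\<lambda>x. \<Sum>i\<in>Basis. (F' x v \<bullet> i) *\<^sub>R h' (F x) i) S"
    proof (rule Ck_sum)
      fix i :: 'b assume "i \<in> Basis"
      have a: "Ck_on L (\<lambda>x. F' x v \<bullet> i) S"
        using Ck_linear[OF bounded_linear_inner_left F(2)[rule_format]] by simp
      have b: "Ck_on L (\<lambda>x. h' (F x) i) S"
        using Suc.IH[OF h(2)[rule_format] Ck_mono[OF Suc.prems(2)] Suc.prems(3)] .
      show "Ck_on L (\<lambda>x. (F' x v \<bullet> i) *\<^sub>R h' (F x) i) S" using Ck_scaleR[OF a b] .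
    qed simp
    then show ?thesis by (rule Ck_cong[OF assms(1), rotated]) (simp add: eq)
  qed
  then show ?case using der by auto
qed

lemma fin_choice_bound:
  assumes "finite I" "\<And>i. i \<in> I \<Longrightarrow> \<exists>B. \<forall>x\<in>X. Q i x \<le> B * W x"
    and "\<And>x. x \<in> X \<Longrightarrow> W x \<ge> (0::real)"
  shows "\<exists>B. \<forall>i\<in>I. \<forall>x\<in>X. Q i x \<le> B * W x"
proof -
  have "\<forall>i\<in>I. \<exists>B. \<forall>x\<in>X. Q i x \<le> B * W x" using assms(2) by blast
  then obtain Bf where Bf: "\<forall>i\<in>I. \<forall>x\<in>X. Q i x \<le> Bf i * W x"
    using bchoice[of I "\<lambda>i B. \<forall>x\<in>X. Q i x \<le> B * W x"] by blast
  have "\<forall>i\<in>I. \<forall>x\<in>X. Q i x \<le> (\<Sum>j\<in>I. \<bar>Bf j\<bar>) * W x"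
  proof (intro ballI)
    fix i x assume i: "i \<in> I" and x: "x \<in> X"
    have "Bf i \<le> (\<Sum>j\<in>I. \<bar>Bf j\<bar>)"
      using member_le_sum[of i I "\<lambda>j. \<bar>Bf j\<bar>"] assms(1) i by force
    then have "Bf i * W x \<le> (\<Sum>j\<in>I. \<bar>Bf j\<bar>) * W x"
      using assms(3)[OF x] by (simp add: mult_right_mono)
    then show "Q i x \<le> (\<Sum>j\<in>I. \<bar>Bf j\<bar>) * W x" using Bf i x by force
  qed
  then show ?thesis by blast
qed

lemma C1_of_Ck:
  assumes "Ck_on L F S" "L \<ge> 1"
  shows "\<exists>F'. (\<forall>x\<in>S. (F has_derivative F' x) (at x)) \<and> (\<forall>v. continuous_on S (\<lambda>x. F' x v))"
proof -
  have "Ck_on (Suc 0) F S" using Ck_mono_le assms by (metis One_nat_def)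
  then show ?thesis by simp
qed

lemma deriv_bound:
  fixes F :: "'a::euclidean_space \<Rightarrow> 'b::real_normed_vector"
  assumes "\<forall>x\<in>S. (F has_derivative F' x) (at x)" "\<forall>v. continuous_on S (\<lambda>x. F' x v)"
    and "compact K" "K \<subseteq> S"
  shows "\<exists>B. \<forall>x\<in>K. \<forall>u. norm (F' x u) \<le> B * norm u"
proof -
  have "\<exists>B. \<forall>x\<in>K. norm (F' x i) \<le> B * 1" if "i \<in> Basis" for i
  proof -
    have "compact ((\<lambda>x. F' x i) ` K)"
      using assms(2-4) compact_continuous_image continuous_on_subset by blast
    then obtain B where "\<forall>y\<in>(\<lambda>x. F' x i) ` K. norm y \<le> B"
      using compact_imp_bounded[of "(\<lambda>x. F' x i) ` K"] unfolding bounded_iff by blast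
    then show ?thesis by auto
  qed
  then obtain B where B: "\<forall>i\<in>Basis. \<forall>x\<in>K. norm (F' x i) \<le> B * 1"
    using fin_choice_bound[of Basis K "\<lambda>i x. norm (F' x i)" "\<lambda>x. 1"] by auto
  have "norm (F' x u) \<le> (DIM('a) * B) * norm u" if x: "x \<in> K" for x u
  proof -
    have lin: "linear (F' x)" using assms(1) x assms(4) has_derivative_linear by blast
    have "F' x u = (\<Sum>i\<in>Basis. (u \<bullet> i) *\<^sub>R F' x i)"
      using lin by (rule lin_repr)
    then have "norm (F' x u) \<le> (\<Sum>i\<in>Basis. norm ((u \<bullet> i) *\<^sub>R F' x i))"
      by (simp only: norm_sum)
    also have "\<dots> \<le> (\<Sum>i\<in>(Basis::'a set). norm u * B)"
    proof (rule sum_mono)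
      fix i :: 'a assume i: "i \<in> Basis"
      have "\<bar>u \<bullet> i\<bar> * norm (F' x i) \<le> norm u * B"
        using B i x Basis_le_norm[OF i, of u]
        by (simp add: mult_mono')
      then show "norm ((u \<bullet> i) *\<^sub>R F' x i) \<le> norm u * B" by simp
    qed
    also have "\<dots> = (DIM('a) * B) * norm u" by simp
    finally show ?thesis .
  qed
  then show ?thesis by blast
qed

lemma lipschitz_C1:
  fixes F :: "'a::euclidean_space \<Rightarrow> 'b::real_normed_vector"
  assumes "Ck_on L F S" "L \<ge> 1" "compact K" "convex K" "K \<subseteq> S"
  shows "\<exists>B. \<forall>x\<in>K. \<forall>y\<in>K. norm (F x - F y) \<le> B * norm (x - y)"
proof -
  obtain F' where F: "\<forall>x\<in>S. (F has_derivative F' x) (at x)" "\<forall>v. continuous_on S (\<lambda>x. F' x v)"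
    using C1_of_Ck[OF assms(1,2)] by blast
  obtain B where B: "\<forall>x\<in>K. \<forall>u. norm (F' x u) \<le> B * norm u"
    using deriv_bound[OF F assms(3,5)] by blast
  have "norm (F x - F y) \<le> B * norm (x - y)" if "x \<in> K" "y \<in> K" for x y
  proof (rule differentiable_bound[OF assms(4)])
    show "(F has_derivative F' z) (at z within K)" if "z \<in> K" for z
      using F(1) that assms(5) has_derivative_at_withinI by blast
    show "onorm (F' z) \<le> B" if "z \<in> K" for z
      using B that by (intro onorm_le) auto
  qed (use that in auto)
  then show ?thesis by blast
qed

lemma jacobian_eq:
  assumes "(F has_derivative F') (at x)" shows "jacobian F (at x) = matrix F'"
  unfolding jacobian_def using frechet_derivative_at[OF assms] by simp

lemma det_nz_kernel:
  fixes A :: "real^'n^'n"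
  shows "det A \<noteq> 0 \<longleftrightarrow> (\<forall>y. A *v y = 0 \<longrightarrow> y = 0)"
proof
  assume "det A \<noteq> 0"
  then obtain A' where A': "A' ** A = mat 1"
    using invertible_det_nz invertible_def by blast
  show "\<forall>y. A *v y = 0 \<longrightarrow> y = 0"
  proof (intro allI impI)
    fix y assume "A *v y = 0"
    then have "A' *v (A *v y) = 0" by simp
    then show "y = 0" by (simp add: matrix_vector_mul_assoc A')
  qed
next
  assume K: "\<forall>y. A *v y = 0 \<longrightarrow> y = 0"
  have "inj ((*v) A)"
  proof (rule injI)
    fix x y assume "A *v x = A *v y"
    then have "A *v (x - y) = 0" by (simp add: matrix_vector_mult_diff_distrib)
    then show "x = y" using K by auto
  qed
  then show "det A \<noteq> 0"
    using det_nz_iff_inj[of "(*v) A"] by simp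
qed

lemma transpose_kernel:
  fixes A :: "real^'n^'n"
  assumes "det A \<noteq> 0" "transpose A *v y = 0" shows "y = 0"
  using assms det_nz_kernel[of "transpose A"] by simp

lemma gram_pos:
  fixes H :: "real^'m^'m" and D :: "real^'k^'m" and J :: "real^'k^'k"
  assumes "det H \<noteq> 0" "det J \<noteq> 0" "det (D ** transpose D) \<noteq> 0" "r \<noteq> 0"
  shows "det ((r *\<^sub>R (H ** D ** J)) ** transpose (r *\<^sub>R (H ** D ** J))) \<noteq> 0"
proof -
  let ?X = "r *\<^sub>R (H ** D ** J)"
  have "y = 0" if y: "(?X ** transpose ?X) *v y = 0" for y
  proof -
    have "inner y ((?X ** transpose ?X) *v y) = 0" using y by simp
    moreover have "inner y ((?X ** transpose ?X) *v y) = inner (transpose ?X *v y) (transpose ?X *v y)"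
    proof -
      have "inner y ((?X ** transpose ?X) *v y) = inner y (?X *v (transpose ?X *v y))"
        by (simp only: matrix_vector_mul_assoc)
      also have "\<dots> = inner (y v* ?X) (transpose ?X *v y)" by (simp add: dot_lmul_matrix)
      also have "y v* ?X = transpose ?X *v y"
        using vector_transpose_matrix[of y "transpose ?X"] by simp
      finally show ?thesis .
    qed
    ultimately have "inner (transpose ?X *v y) (transpose ?X *v y) = 0" by simp
    then have t: "transpose ?X *v y = 0" by simp
    have tr: "transpose (r *\<^sub>R M) = r *\<^sub>R transpose M" for M :: "real^'k^'m"
      by (simp add: transpose_def vec_eq_iff)
    have "transpose ?X = r *\<^sub>R (transpose J ** (transpose D ** transpose H))"
      by (simp add: tr matrix_transpose_mul matrix_mul_assoc)
    then have "r *\<^sub>R (transpose J *v (transpose D *v (transpose H *v y))) = 0"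
      using t by (simp only: matrix_vector_mul_assoc scaleR_matrix_vector_assoc)
    then have "transpose J *v (transpose D *v (transpose H *v y)) = 0" using assms(4) by simp
    then have "transpose D *v (transpose H *v y) = 0" using transpose_kernel assms(2) by blast
    then have "(D ** transpose D) *v (transpose H *v y) = 0"
      by (simp add: matrix_vector_mul_assoc[symmetric])
    then have "transpose H *v y = 0" using assms(3) det_nz_kernel by blast
    then show "y = 0" using transpose_kernel assms(1) by blast
  qed
  then show ?thesis using det_nz_kernel by blast
qed

lemma continuous_on_matmul[continuous_intros]:
  fixes A :: "'a::topological_space \<Rightarrow> real^'n^'m" and B :: "'a \<Rightarrow> real^'p^'n"
  assumes "continuous_on S A" "continuous_on S B"
  shows "continuous_on S (\<lambda>x. A x ** B x)"
  unfolding matrix_matrix_mult_def using assms by (intro continuous_intros)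

lemma continuous_on_transpose[continuous_intros]:
  fixes A :: "'a::topological_space \<Rightarrow> real^'n^'m"
  assumes "continuous_on S A"
  shows "continuous_on S (\<lambda>x. transpose (A x))"
  unfolding transpose_def using assms by (intro continuous_intros)

lemma continuous_on_det[continuous_intros]:
  fixes A :: "'a::topological_space \<Rightarrow> real^'n^'n"
  assumes "continuous_on S A"
  shows "continuous_on S (\<lambda>x. det (A x))"
  unfolding det_def using assms by (intro continuous_intros)

lemma matrix_norm_bound:
  fixes F :: "real^'k \<Rightarrow> real^'m"
  assumes "\<And>j. norm (F (axis j 1)) \<le> b"
  shows "norm (matrix F) \<le> real CARD('m) * real CARD('k) * b"
proof -
  have "norm (matrix F) \<le> (\<Sum>i\<in>UNIV. norm (matrix F $ i))"
    by (simp add: norm_vec_def L2_set_le_sum)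
  also have "\<dots> \<le> (\<Sum>i\<in>(UNIV::'m set). \<Sum>j\<in>(UNIV::'k set). b)"
  proof (rule sum_mono)
    fix i
    have "norm (matrix F $ i) \<le> (\<Sum>j\<in>UNIV. \<bar>matrix F $ i $ j\<bar>)" by (rule norm_le_l1_cart)
    also have "\<dots> \<le> (\<Sum>j\<in>(UNIV::'k set). b)"
    proof (rule sum_mono)
      fix j
      have "\<bar>matrix F $ i $ j\<bar> = \<bar>F (axis j 1) $ i\<bar>" by (simp add: matrix_def)
      also have "\<dots> \<le> norm (F (axis j 1))" by (rule component_le_norm_cart)
      finally show "\<bar>matrix F $ i $ j\<bar> \<le> b" using assms[of j] by simp
    qed
    finally show "norm (matrix F $ i) \<le> (\<Sum>j\<in>(UNIV::'k set). b)" .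
  qed
  also have "\<dots> = real CARD('m) * real CARD('k) * b" by simp
  finally show ?thesis .
qed

lemma pos_inf_compact:
  fixes F :: "'a::metric_space \<Rightarrow> real"
  assumes "compact K" "continuous_on K F" "\<forall>z\<in>K. F z > 0"
  shows "\<exists>\<mu>>0. \<forall>z\<in>K. \<mu> \<le> F z"
proof (cases "K = {}")
  case True then show ?thesis by (intro exI[of _ 1]) auto
next
  case False
  then obtain z0 where "z0 \<in> K" "\<forall>z\<in>K. F z0 \<le> F z"
    using continuous_attains_inf[OF assms(1) False assms(2)] by blast
  then show ?thesis using assms(3) by blast
qed


lemma lin_bound_basis:
  fixes T :: "'a::euclidean_space \<Rightarrow> 'b::real_normed_vector" and c :: real
  assumes "linear T" "\<forall>i\<in>Basis. norm (T i) \<le> c"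
  shows "norm (T u) \<le> real DIM('a) * c * norm u"
proof -
  have "T u = (\<Sum>i\<in>Basis. (u \<bullet> i) *\<^sub>R T i)"
    using assms(1) by (rule lin_repr)
  then have "norm (T u) \<le> (\<Sum>i\<in>Basis. norm ((u \<bullet> i) *\<^sub>R T i))"
    by (simp only: norm_sum)
  also have "\<dots> \<le> (\<Sum>i\<in>(Basis::'a set). norm u * c)"
  proof (rule sum_mono)
    fix i :: 'a assume i: "i \<in> Basis"
    have "\<bar>u \<bullet> i\<bar> * norm (T i) \<le> norm u * c"
      using assms(2) i Basis_le_norm[OF i, of u]
      by (simp add: mult_mono')
    then show "norm ((u \<bullet> i) *\<^sub>R T i) \<le> norm u * c" by simp
  qed
  also have "\<dots> = real DIM('a) * c * norm u" by simp
  finally show ?thesis .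
qed

lemma inv_deriv_det:
  fixes F G :: "real^'n \<Rightarrow> real^'n"
  assumes "open S" "y \<in> S" "(F has_derivative F') (at y)" "(G has_derivative G') (at (F y))"
    "\<forall>x\<in>S. G (F x) = x"
  shows "det (matrix F') \<noteq> 0"
proof -
  have "((\<lambda>x. G (F x)) has_derivative (\<lambda>u. G' (F' u))) (at y)"
    using diff_chain_at[OF assms(3,4)] by (simp add: o_def)
  then have "((\<lambda>x. x) has_derivative (\<lambda>u. G' (F' u))) (at y)"
    by (rule has_derivative_transform_within_open[OF _ assms(1,2)]) (use assms(5) in auto)
  then have e: "(\<lambda>u. G' (F' u)) = (\<lambda>u. u)"
    using has_derivative_unique has_derivative_ident by blast
  have lF: "linear F'" "linear G'" using assms(3,4) has_derivative_linear by blast+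
  have "matrix G' ** matrix F' = matrix (G' \<circ> F')" using matrix_compose[OF lF] by simp
  also have "G' \<circ> F' = id" using e by (simp add: fun_eq_iff)
  finally have "det (matrix G' ** matrix F') = 1" by (simp add: matrix_id_mat_1[unfolded id_def])
  then have "det (matrix G') * det (matrix F') = 1" by (simp add: det_mul)
  then show ?thesis by auto
qed

lemma lipschitz_pos:
  fixes F :: "'a::euclidean_space \<Rightarrow> 'b::real_normed_vector"
  assumes "Ck_on L F S" "L \<ge> 1" "compact K" "convex K" "K \<subseteq> S"
  shows "\<exists>B\<ge>1. \<forall>x\<in>K. \<forall>y\<in>K. norm (F x - F y) \<le> B * norm (x - y)"
proof -
  obtain B where B: "\<forall>x\<in>K. \<forall>y\<in>K. norm (F x - F y) \<le> B * norm (x - y)"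
    using lipschitz_C1[OF assms] by blast
  have "\<forall>x\<in>K. \<forall>y\<in>K. norm (F x - F y) \<le> max B 1 * norm (x - y)"
  proof (intro ballI)
    fix x y assume "x \<in> K" "y \<in> K"
    then have "norm (F x - F y) \<le> B * norm (x - y)" using B by blast
    also have "\<dots> \<le> max B 1 * norm (x - y)" by (intro mult_right_mono) auto
    finally show "norm (F x - F y) \<le> max B 1 * norm (x - y)" .
  qed
  then show ?thesis by (intro exI[of _ "max B 1"]) auto
qed

theorem lemma2p2:
  fixes L :: nat
    and \<Lambda> \<Lambda>t :: "(real^'k) set" and \<Omega> \<Omega>t :: "(real^'n) set" and U Ut :: "(real^'m) set"
    and f :: "real^'k \<Rightarrow> real^'k" and g :: "real^'n \<Rightarrow> real^'n" and h :: "real^'m \<Rightarrow> real^'m"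
    and P Pt :: "(real^'k) \<times> (real^'n) \<Rightarrow> real^'m"
  assumes "L \<ge> 2"
    and "CARD('k) \<ge> CARD('m)"
    and "open \<Lambda>" "open \<Lambda>t" "open \<Omega>" "open \<Omega>t" "open U" "open Ut"
    and "Ck_diffeo L f \<Lambda> \<Lambda>t" "Ck_diffeo L g \<Omega> \<Omega>t" "Ck_diffeo L h U Ut"
    and "P ` (\<Lambda> \<times> \<Omega>) \<subseteq> U"
    and "\<forall>l\<in>\<Lambda>. \<forall>w\<in>\<Omega>. Pt (f l, g w) = h (P (l, w))"
    and "Ck_on L P (\<Lambda> \<times> \<Omega>)"
    and "locally_transversal_on P \<Lambda> \<Omega>"
  shows "Ck_on L Pt (\<Lambda>t \<times> \<Omega>t) \<and> locally_transversal_on Pt \<Lambda>t \<Omega>t"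
proof -
  note oL = assms(3) and oLt = assms(4) and oO = assms(5) and oOt = assms(6) and oU = assms(7) and oUt = assms(8)
  note Pim = assms(12) and Peq = assms(13) and PCk = assms(14)
  obtain L2 where L2: "L = Suc (Suc L2)" using assms(1) by (metis add_2_eq_Suc' le_add_diff_inverse2)
  have L1: "L \<ge> 1" using L2 by simp
  obtain fi where fi: "f ` \<Lambda> \<subseteq> \<Lambda>t" "fi ` \<Lambda>t \<subseteq> \<Lambda>" "\<forall>x\<in>\<Lambda>. fi (f x) = x" "\<forall>y\<in>\<Lambda>t. f (fi y) = y"
     "Ck_on L f \<Lambda>" "Ck_on L fi \<Lambda>t"
    using assms(9) unfolding Ck_diffeo_def by blast
  obtain gi where gi: "g ` \<Omega> \<subseteq> \<Omega>t" "gi ` \<Omega>t \<subseteq> \<Omega>" "\<forall>x\<in>\<Omega>. gi (g x) = x" "\<forall>y\<in>\<Omega>t. g (gi y) = y"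
     "Ck_on L g \<Omega>" "Ck_on L gi \<Omega>t"
    using assms(10) unfolding Ck_diffeo_def by blast
  obtain hi where hi: "h ` U \<subseteq> Ut" "hi ` Ut \<subseteq> U" "\<forall>x\<in>U. hi (h x) = x" "\<forall>y\<in>Ut. h (hi y) = y"
     "Ck_on L h U" "Ck_on L hi Ut"
    using assms(11) unfolding Ck_diffeo_def by blast
  have PtE: "Pt (l, w) = h (P (fi l, gi w))" if "l \<in> \<Lambda>t" "w \<in> \<Omega>t" for l w
  proof -
    have "fi l \<in> \<Lambda>" "gi w \<in> \<Omega>" using that fi(2) gi(2) by auto
    then have "Pt (f (fi l), g (gi w)) = h (P (fi l, gi w))" using Peq by blast
    then show ?thesis using that fi(4) gi(4) by simp
  qed
  have part1: "Ck_on L Pt (\<Lambda>t \<times> \<Omega>t)"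
  proof -
    have oT: "open (\<Lambda>t \<times> \<Omega>t)" using oLt oOt by (simp add: open_Times)
    have c1: "Ck_on L (\<lambda>z. fi (fst z)) (\<Lambda>t \<times> \<Omega>t)"
      by (rule Ck_compose[OF oT fi(6) Ck_linfun[OF bounded_linear_fst]]) auto
    have c2: "Ck_on L (\<lambda>z. gi (snd z)) (\<Lambda>t \<times> \<Omega>t)"
      by (rule Ck_compose[OF oT gi(6) Ck_linfun[OF bounded_linear_snd]]) auto
    have c3: "Ck_on L (\<lambda>z. P (fi (fst z), gi (snd z))) (\<Lambda>t \<times> \<Omega>t)"
      by (rule Ck_compose[OF oT PCk Ck_pair[OF c1 c2]]) (use fi(2) gi(2) in auto)
    have c4: "Ck_on L (\<lambda>z. h (P (fi (fst z), gi (snd z)))) (\<Lambda>t \<times> \<Omega>t)"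
    proof (rule Ck_compose[OF oT hi(5) c3], intro subsetI)
      fix y assume "y \<in> (\<lambda>z. P (fi (fst z), gi (snd z))) ` (\<Lambda>t \<times> \<Omega>t)"
      then obtain z where z: "z \<in> \<Lambda>t \<times> \<Omega>t" "y = P (fi (fst z), gi (snd z))" by blast
      then have "(fi (fst z), gi (snd z)) \<in> \<Lambda> \<times> \<Omega>" using fi(2) gi(2) by auto
      then show "y \<in> U" using Pim z(2) by blast
    qed
    show ?thesis
      by (rule Ck_cong[OF oT _ c4]) (auto simp: PtE)
  qed
  have part2: "locally_transversal_on Pt \<Lambda>t \<Omega>t"
    unfolding locally_transversal_on_def
  proof (intro ballI)
    fix p assume "p \<in> \<Lambda>t \<times> \<Omega>t"
    then obtain l0t w0t where p: "p = (l0t, w0t)" "l0t \<in> \<Lambda>t" "w0t \<in> \<Omega>t" by blast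
    define l0 where "l0 = fi l0t"
    define w0 where "w0 = gi w0t"
    have l0: "l0 \<in> \<Lambda>" "f l0 = l0t" using p(2) fi(2,4) unfolding l0_def by auto
    have w0: "w0 \<in> \<Omega>" "g w0 = w0t" using p(3) gi(2,4) unfolding w0_def by auto
    obtain A' B' where AB: "open A'" "open B'" "(l0, w0) \<in> A' \<times> B'" "A' \<subseteq> \<Lambda>" "B' \<subseteq> \<Omega>"
        "transversal_on P A' B'"
    proof -
      have "(l0, w0) \<in> \<Lambda> \<times> \<Omega>" using l0(1) w0(1) by simp
      from assms(15)[unfolded locally_transversal_on_def, rule_format, OF this]
      show ?thesis using that by (elim exE conjE) assumption
    qed
    obtain C where C: "C > 0" "\<forall>l\<in>A'. \<forall>v\<in>B'. \<forall>w\<in>B'. v \<noteq> w \<longrightarrow> norm (Phi P l v w) \<le> C \<longrightarrow>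
        C\<^sup>2 \<le> \<bar>det (jacobian (\<lambda>l'. Phi P l' v w) (at l) ** transpose (jacobian (\<lambda>l'. Phi P l' v w) (at l)))\<bar>"
      using AB(6) unfolding transversal_on_def by (elim exE conjE) (rule that)
    obtain P' where P'd: "\<forall>x\<in>\<Lambda>\<times>\<Omega>. (P has_derivative P' x) (at x)"
        and P'c: "\<forall>v. Ck_on (Suc L2) (\<lambda>x. P' x v) (\<Lambda>\<times>\<Omega>)"
      using PCk unfolding L2 Ck_on.simps(2)[of "Suc L2"] by blast
    obtain h' where h'd: "\<forall>y\<in>U. (h has_derivative h' y) (at y)"
        and h'c: "\<forall>v. Ck_on (Suc L2) (\<lambda>y. h' y v) U"
      using hi(5) unfolding L2 Ck_on.simps(2)[of "Suc L2"] by blast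
    obtain fi' where fi'd: "\<forall>y\<in>\<Lambda>t. (fi has_derivative fi' y) (at y)"
        and fi'c: "\<forall>v. continuous_on \<Lambda>t (\<lambda>y. fi' y v)"
      using C1_of_Ck[OF fi(6) L1] by blast
    obtain f' where f'd: "\<forall>x\<in>\<Lambda>. (f has_derivative f' x) (at x)"
      using C1_of_Ck[OF fi(5) L1] by blast
    obtain hi' where hi'd: "\<forall>y\<in>Ut. (hi has_derivative hi' y) (at y)"
      using C1_of_Ck[OF hi(6) L1] by blast
    have Hdet: "det (matrix (h' y)) \<noteq> 0" if "y \<in> U" for y
    proof -
      have "h y \<in> Ut" using hi(1) that by blast
      then show ?thesis
        using inv_deriv_det[OF oU that h'd[rule_format, OF that] hi'd[rule_format, OF \<open>h y \<in> Ut\<close>] hi(3)] by simp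
    qed
    have Jdet: "det (matrix (fi' (f l))) \<noteq> 0" if "l \<in> \<Lambda>" for l
    proof -
      have fl: "f l \<in> \<Lambda>t" using fi(1) that by blast
      have "(f has_derivative f' l) (at (fi (f l)))" using f'd that fi(3) by simp
      then show ?thesis using inv_deriv_det[OF oLt fl fi'd[rule_format, OF fl] _ fi(4)] by blast
    qed
    have Pcont: "continuous_on (\<Lambda>\<times>\<Omega>) P" using Ck_cont[OF PCk] .
    have hcont: "continuous_on U h" using Ck_cont[OF hi(5)] .
    have gcont: "continuous_on \<Omega> g" using Ck_cont[OF gi(5)] .
    have fcont: "continuous_on \<Lambda> f" using Ck_cont[OF fi(5)] .
    define a0 where "a0 = P (l0, w0)"
    have a0U: "a0 \<in> U" using Pim l0 w0 unfolding a0_def by blast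
    have ha0: "h a0 \<in> Ut" using hi(1) a0U by blast
    obtain t where t: "t > 0" "cball (h a0) t \<subseteq> Ut" using oUt ha0 open_contains_cball by blast
    have "open (h -` ball (h a0) t \<inter> U)"
      using continuous_on_open_vimage[OF oU, THEN iffD1, OF hcont, rule_format, OF open_ball] .
    moreover have "a0 \<in> h -` ball (h a0) t \<inter> U" using a0U t by simp
    ultimately obtain s where s: "s > 0" "cball a0 s \<subseteq> h -` ball (h a0) t \<inter> U"
      using open_contains_cball by blast
    have sU: "cball a0 s \<subseteq> U" and sh: "\<forall>a\<in>cball a0 s. h a \<in> ball (h a0) t" using s by auto
    have gw0: "g w0 \<in> \<Omega>t" using gi(1) w0 by blast
    obtain tg where tg: "tg > 0" "cball (g w0) tg \<subseteq> \<Omega>t" using oOt gw0 open_contains_cball by blast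
    have oLO: "open (\<Lambda>\<times>\<Omega>)" using oL oO by (simp add: open_Times)
    have oPv: "open (P -` ball a0 s \<inter> (\<Lambda>\<times>\<Omega>))"
      using continuous_on_open_vimage[OF oLO, THEN iffD1, OF Pcont, rule_format, OF open_ball] .
    have ogv: "open (g -` ball (g w0) tg \<inter> \<Omega>)"
      using continuous_on_open_vimage[OF oO, THEN iffD1, OF gcont, rule_format, OF open_ball] .
    define W where "W = (A' \<times> B') \<inter> (P -` ball a0 s \<inter> (\<Lambda>\<times>\<Omega>)) \<inter> (UNIV \<times> (g -` ball (g w0) tg \<inter> \<Omega>))"
    have oW: "open W" unfolding W_def
      by (intro open_Int open_Times AB(1) AB(2) oPv ogv open_UNIV)
    have Wiff: "(l, v) \<in> W \<longleftrightarrow> l \<in> A' \<and> v \<in> B' \<and> P (l, v) \<in> ball a0 s \<and> l \<in> \<Lambda> \<and> v \<in> \<Omega> \<and> g v \<in> ball (g w0) tg" for l v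
      unfolding W_def by auto
    have "(l0, w0) \<in> W" unfolding Wiff using AB(3) l0 w0 s(1) tg(1) unfolding a0_def by auto
    then obtain e where e: "e > 0" "cball (l0, w0) e \<subseteq> W" using oW open_contains_cball by blast
    define \<rho> where "\<rho> = e / 2"
    have \<rho>: "\<rho> > 0" using e unfolding \<rho>_def by simp
    define A0 where "A0 = cball l0 \<rho>"
    define B0 where "B0 = cball w0 \<rho>"
    have A0B0W: "(l, v) \<in> W" if "l \<in> A0" "v \<in> B0" for l v
    proof -
      have "dist (l0, w0) (l, v) = norm (l0 - l, w0 - v)" by (simp add: dist_norm)
      also have "\<dots> \<le> norm (l0 - l) + norm (w0 - v)" by (rule norm_Pair_le)
      also have "\<dots> \<le> e" using that unfolding A0_def B0_def \<rho>_def by (simp add: dist_norm)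
      finally have "(l, v) \<in> cball (l0, w0) e" by simp
      then show ?thesis using e(2) by blast
    qed
    have l0A0: "l0 \<in> A0" and w0B0: "w0 \<in> B0" using \<rho> unfolding A0_def B0_def by auto
    have A0A': "A0 \<subseteq> A'" using A0B0W[OF _ w0B0] unfolding Wiff by blast
    have B0B': "B0 \<subseteq> B'" using A0B0W[OF l0A0] unfolding Wiff by blast
    have A0L: "A0 \<subseteq> \<Lambda>" using A0A' AB(4) by blast
    have B0O: "B0 \<subseteq> \<Omega>" using B0B' AB(5) by blast
    have PA0B0: "P (l, v) \<in> ball a0 s" if "l \<in> A0" "v \<in> B0" for l v
      using A0B0W[OF that] unfolding Wiff by blast
    have gB0: "g v \<in> ball (g w0) tg" if "v \<in> B0" for v
      using A0B0W[OF l0A0 that] unfolding Wiff by blast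
    have A0B0L: "A0 \<times> B0 \<subseteq> \<Lambda> \<times> \<Omega>" using A0L B0O by blast
    have cA0B0: "compact (A0 \<times> B0)" "convex (A0 \<times> B0)"
      unfolding A0_def B0_def by (auto intro: compact_Times convex_Times)
    obtain Mg where Mg: "Mg \<ge> 1" "\<forall>x\<in>B0. \<forall>y\<in>B0. norm (g x - g y) \<le> Mg * norm (x - y)"
      using lipschitz_pos[OF gi(5) L1 _ _ B0O] unfolding B0_def by auto
    obtain Mgi where Mgi: "Mgi \<ge> 1" "\<forall>x\<in>cball (g w0) tg. \<forall>y\<in>cball (g w0) tg. norm (gi x - gi y) \<le> Mgi * norm (x - y)"
      using lipschitz_pos[OF gi(6) L1 _ _ tg(2)] by auto
    obtain Mhi where Mhi: "Mhi \<ge> 1" "\<forall>x\<in>cball (h a0) t. \<forall>y\<in>cball (h a0) t. norm (hi x - hi y) \<le> Mhi * norm (x - y)"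
      using lipschitz_pos[OF hi(6) L1 _ _ t(2)] by auto
    have "\<exists>B. \<forall>i\<in>(Basis::(real^'m) set). \<forall>z\<in>cball a0 s \<times> cball a0 s.
        norm (h' (fst z) i - h' (snd z) i) \<le> B * norm (fst z - snd z)"
    proof (rule fin_choice_bound)
      fix i :: "real^'m" assume "i \<in> Basis"
      obtain B where "\<forall>x\<in>cball a0 s. \<forall>y\<in>cball a0 s. norm (h' x i - h' y i) \<le> B * norm (x - y)"
        using lipschitz_C1[OF h'c[rule_format, of i] _ compact_cball convex_cball sU] by auto
      then show "\<exists>B. \<forall>z\<in>cball a0 s \<times> cball a0 s. norm (h' (fst z) i - h' (snd z) i) \<le> B * norm (fst z - snd z)"
        by auto
    qed auto
    then obtain Bh0 where Bh0: "\<forall>i\<in>(Basis::(real^'m) set). \<forall>z\<in>cball a0 s \<times> cball a0 s.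
        norm (h' (fst z) i - h' (snd z) i) \<le> Bh0 * norm (fst z - snd z)" by blast
    define Bh where "Bh = max Bh0 0"
    have Bh: "Bh \<ge> 0" unfolding Bh_def by simp
    have hdiff: "norm (h' a u - h' b u) \<le> (real DIM(real^'m) * (Bh * norm (a - b))) * norm u"
      if "a \<in> cball a0 s" "b \<in> cball a0 s" for a b u
    proof -
      have "linear (h' a)" "linear (h' b)" using h'd sU that has_derivative_linear by blast+
      then have lin: "linear (\<lambda>u. h' a u - h' b u)" by (rule linear_compose_sub)
      have "\<forall>i\<in>Basis. norm (h' a i - h' b i) \<le> Bh * norm (a - b)"
      proof
        fix i :: "real^'m" assume "i \<in> Basis"
        then have "norm (h' a i - h' b i) \<le> Bh0 * norm (a - b)" using Bh0 that by force
        also have "\<dots> \<le> Bh * norm (a - b)" unfolding Bh_def by (intro mult_right_mono) auto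
        finally show "norm (h' a i - h' b i) \<le> Bh * norm (a - b)" .
      qed
      from lin_bound_basis[OF lin this] show ?thesis by simp
    qed
    have P'cont: "\<forall>v. continuous_on (\<Lambda>\<times>\<Omega>) (\<lambda>x. P' x v)" using Ck_cont P'c by blast
    obtain BP0 where BP0: "\<forall>x\<in>A0 \<times> B0. \<forall>u. norm (P' x u) \<le> BP0 * norm u"
      using deriv_bound[OF P'd P'cont cA0B0(1) A0B0L] by blast
    define BP where "BP = max BP0 0"
    have BP: "BP \<ge> 0" "norm (P' (l, v) (u, 0)) \<le> BP * norm u" if "l \<in> A0" "v \<in> B0" for l v u
    proof -
      show "BP \<ge> 0" unfolding BP_def by simp
      have "norm (P' (l, v) (u, 0)) \<le> BP0 * norm (u, 0::real^'n)" using BP0 that by blast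
      also have "\<dots> \<le> BP * norm u" unfolding BP_def by (simp add: norm_Pair mult_right_mono)
      finally show "norm (P' (l, v) (u, 0)) \<le> BP * norm u" .
    qed
    have "\<exists>B. \<forall>j\<in>(Basis::(real^'k) set). \<forall>z\<in>A0 \<times> B0 \<times> B0.
        norm (P' (fst z, fst (snd z)) (j, 0) - P' (fst z, snd (snd z)) (j, 0)) \<le> B * norm (fst (snd z) - snd (snd z))"
    proof (rule fin_choice_bound)
      fix j :: "real^'k" assume "j \<in> Basis"
      obtain B where B: "\<forall>x\<in>A0 \<times> B0. \<forall>y\<in>A0 \<times> B0. norm (P' x (j, 0) - P' y (j, 0)) \<le> B * norm (x - y)"
        using lipschitz_C1[OF P'c[rule_format, of "(j, 0)"] _ cA0B0 A0B0L] by auto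
      show "\<exists>B. \<forall>z\<in>A0 \<times> B0 \<times> B0.
        norm (P' (fst z, fst (snd z)) (j, 0) - P' (fst z, snd (snd z)) (j, 0)) \<le> B * norm (fst (snd z) - snd (snd z))"
      proof (intro exI ballI)
        fix z assume "z \<in> A0 \<times> B0 \<times> B0"
        then obtain l v w where z: "z = (l, v, w)" "l \<in> A0" "v \<in> B0" "w \<in> B0" by auto
        have "norm (P' (l, v) (j, 0) - P' (l, w) (j, 0)) \<le> B * norm ((l, v) - (l, w))"
          using B z(2-4) by blast
        also have "norm ((l, v) - (l, w)) = norm (v - w)" by (simp add: norm_Pair)
        finally show "norm (P' (fst z, fst (snd z)) (j, 0) - P' (fst z, snd (snd z)) (j, 0)) \<le> B * norm (fst (snd z) - snd (snd z))"
          using z(1) by simp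
      qed
    qed auto
    then obtain BQ0 where BQ0: "\<forall>j\<in>(Basis::(real^'k) set). \<forall>z\<in>A0 \<times> B0 \<times> B0.
        norm (P' (fst z, fst (snd z)) (j, 0) - P' (fst z, snd (snd z)) (j, 0)) \<le> BQ0 * norm (fst (snd z) - snd (snd z))"
      by blast
    define BQ where "BQ = max BQ0 0"
    have BQ: "norm (P' (l, v) (j, 0) - P' (l, w) (j, 0)) \<le> BQ * norm (v - w)"
      if "j \<in> Basis" "l \<in> A0" "v \<in> B0" "w \<in> B0" for j l v w
    proof -
      have "norm (P' (l, v) (j, 0) - P' (l, w) (j, 0)) \<le> BQ0 * norm (v - w)"
        using BQ0 that by force
      also have "\<dots> \<le> BQ * norm (v - w)" unfolding BQ_def by (intro mult_right_mono) auto
      finally show ?thesis .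
    qed
    define MD where "MD = real CARD('m) * real CARD('k) * BQ"
    define HS where "HS = (\<lambda>y. matrix (h' y)) ` cball a0 s"
    define DS where "DS = {D :: real^'k^'m. norm D \<le> MD \<and> C\<^sup>2 \<le> \<bar>det (D ** transpose D)\<bar>}"
    define JS where "JS = (\<lambda>l. matrix (fi' (f l))) ` A0"
    define RS where "RS = {1 / Mg .. Mgi}"
    define K2 where "K2 = HS \<times> DS \<times> JS \<times> RS \<times> {0 :: real^'k^'m}"
    define Xf where "Xf = (\<lambda>z::(real^'m^'m) \<times> (real^'k^'m) \<times> (real^'k^'k) \<times> real \<times> (real^'k^'m).
         fst (snd (snd (snd z))) *\<^sub>R ((fst z ** fst (snd z) + snd (snd (snd (snd z)))) ** fst (snd (snd z))))"
    define Fm where "Fm = (\<lambda>z. \<bar>det (Xf z ** transpose (Xf z))\<bar>)"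
    have Fmc: "continuous_on UNIV Fm" unfolding Fm_def Xf_def by (intro continuous_intros)
    have h'cont: "\<forall>u. continuous_on (cball a0 s) (\<lambda>y. h' y u)"
      using Ck_cont h'c continuous_on_subset sU by blast
    have cHS: "compact HS" unfolding HS_def
    proof (rule compact_continuous_image[OF _ compact_cball])
      show "continuous_on (cball a0 s) (\<lambda>y. matrix (h' y))" unfolding matrix_def
        by (intro continuous_on_vec_lambda continuous_on_component h'cont[rule_format])
    qed
    have fi'A0: "\<forall>u. continuous_on A0 (\<lambda>l. fi' (f l) u)"
    proof
      fix u
      have "continuous_on A0 f" using fcont A0L continuous_on_subset by blast
      moreover have "f ` A0 \<subseteq> \<Lambda>t" using fi(1) A0L by blast
      ultimately show "continuous_on A0 (\<lambda>l. fi' (f l) u)"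
        using continuous_on_compose2[OF fi'c[rule_format]] by blast
    qed
    have cJS: "compact JS" unfolding JS_def
    proof (rule compact_continuous_image)
      show "continuous_on A0 (\<lambda>l. matrix (fi' (f l)))" unfolding matrix_def
        by (intro continuous_on_vec_lambda continuous_on_component fi'A0[rule_format])
      show "compact A0" unfolding A0_def by simp
    qed
    have cDS: "compact DS" unfolding compact_eq_bounded_closed
    proof
      show "bounded DS" unfolding bounded_iff DS_def by blast
      have "closed {D :: real^'k^'m. norm D \<le> MD \<and> C\<^sup>2 \<le> \<bar>det (D ** transpose D)\<bar>}"
        by (intro closed_Collect_conj closed_Collect_le continuous_intros)
      then show "closed DS" unfolding DS_def .
    qed
    have cK2: "compact K2" unfolding K2_def RS_def
      by (intro compact_Times cHS cDS cJS compact_Icc compact_sing)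
    have Fpos: "\<forall>z\<in>K2. 0 < Fm z"
    proof
      fix z assume "z \<in> K2"
      then obtain y D l r where z: "z = (matrix (h' y), D, matrix (fi' (f l)), r, 0)" "y \<in> cball a0 s"
          "D \<in> DS" "l \<in> A0" "r \<in> RS"
        unfolding K2_def HS_def JS_def by blast
      have "C\<^sup>2 > 0" using C(1) by simp
      then have dD: "det (D ** transpose D) \<noteq> 0" using z(3) unfolding DS_def by auto
      have "1 / Mg > 0" using Mg(1) by simp
      then have r0: "r \<noteq> 0" using z(5) unfolding RS_def by auto
      have "det ((r *\<^sub>R (matrix (h' y) ** D ** matrix (fi' (f l)))) ** transpose (r *\<^sub>R (matrix (h' y) ** D ** matrix (fi' (f l))))) \<noteq> 0"
        by (rule gram_pos[OF Hdet Jdet dD r0]) (use z(2,4) sU A0L in auto)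
      then show "0 < Fm z" unfolding Fm_def Xf_def z(1) by simp
    qed
    obtain \<mu> where \<mu>: "\<mu> > 0" "\<forall>z\<in>K2. \<mu> \<le> Fm z"
      using pos_inf_compact[OF cK2 continuous_on_subset[OF Fmc] Fpos] by blast
    have oO: "open {z. \<mu> / 2 < Fm z}" using open_Collect_less[OF continuous_on_const Fmc] .
    have "K2 \<subseteq> {z. \<mu> / 2 < Fm z}" using \<mu> by force
    then obtain \<delta> where \<delta>: "\<delta> > 0" "(\<Union>z\<in>K2. ball z \<delta>) \<subseteq> {z. \<mu> / 2 < Fm z}"
      using compact_subset_open_imp_ball_epsilon_subset[OF cK2 oO] by blast
    define Kphi where "Kphi = Mg * Mhi"
    have Kphi: "Kphi \<ge> 1" unfolding Kphi_def using Mg(1) Mhi(1) by (metis mult_mono' mult_1 zero_le_one)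
    define KE where "KE = real CARD('m) * real CARD('k) * (real CARD('m) * Bh * BP) + 1"
    have KE: "KE \<ge> 1" unfolding KE_def using Bh BP(1)[OF l0A0 w0B0] by simp
    define c where "c = min (sqrt (\<mu> / 2)) (min (C / Kphi) (\<delta> / (2 * KE * Kphi)))"
    have c: "c > 0" unfolding c_def using \<mu> C(1) Kphi KE \<delta> by simp
    have cmu: "c\<^sup>2 \<le> \<mu> / 2"
    proof -
      have "c \<le> sqrt (\<mu> / 2)" unfolding c_def by simp
      then have "c\<^sup>2 \<le> (sqrt (\<mu> / 2))\<^sup>2" using c by (intro power_mono) auto
      then show ?thesis using \<mu> by simp
    qed
    have cC: "Kphi * c \<le> C"
    proof -
      have "c \<le> C / Kphi" unfolding c_def by simp
      then show ?thesis using Kphi by (simp add: field_simps)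
    qed
    have cd: "KE * (Kphi * c) < \<delta>"
    proof -
      have "c \<le> \<delta> / (2 * KE * Kphi)" unfolding c_def by simp
      then have "KE * (Kphi * c) \<le> \<delta> / 2" using Kphi KE by (simp add: field_simps)
      then show ?thesis using \<delta> by simp
    qed
    define At where "At = fi -` ball l0 \<rho> \<inter> \<Lambda>t"
    define Bt where "Bt = gi -` ball w0 \<rho> \<inter> \<Omega>t"
    have oAt: "open At" unfolding At_def
      using continuous_on_open_vimage[OF oLt, THEN iffD1, OF Ck_cont[OF fi(6)], rule_format, OF open_ball] .
    have oBt: "open Bt" unfolding Bt_def
      using continuous_on_open_vimage[OF oOt, THEN iffD1, OF Ck_cont[OF gi(6)], rule_format, OF open_ball] .
    have pAB: "p \<in> At \<times> Bt" unfolding At_def Bt_def using p \<rho> l0_def w0_def by simp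
    have tr: "transversal_on Pt At Bt"
      unfolding transversal_on_def
    proof (intro exI[of _ c] conjI c ballI impI)
      fix lt vt wt assume lt: "lt \<in> At" and vt: "vt \<in> Bt" and wt: "wt \<in> Bt" and vwt: "vt \<noteq> wt"
        and small: "norm (Phi Pt lt vt wt) \<le> c"
      define l where "l = fi lt"
      define v where "v = gi vt"
      define w where "w = gi wt"
      have ltL: "lt \<in> \<Lambda>t" and vtO: "vt \<in> \<Omega>t" and wtO: "wt \<in> \<Omega>t" using lt vt wt unfolding At_def Bt_def by auto
      have lA0: "l \<in> A0" using lt unfolding At_def A0_def l_def by auto
      have vB0: "v \<in> B0" using vt unfolding Bt_def B0_def v_def by auto
      have wB0: "w \<in> B0" using wt unfolding Bt_def B0_def w_def by auto
      have lL: "l \<in> \<Lambda>" using lA0 A0L by blast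
      have vO: "v \<in> \<Omega>" and wO: "w \<in> \<Omega>" using vB0 wB0 B0O by blast+
      have flt: "f l = lt" using fi(4) ltL unfolding l_def by simp
      have gv: "g v = vt" using gi(4) vtO unfolding v_def by simp
      have gw: "g w = wt" using gi(4) wtO unfolding w_def by simp
      have vw: "v \<noteq> w" using vwt gv gw by auto
      have nvw: "norm (v - w) > 0" using vw by simp
      have nvwt: "norm (vt - wt) > 0" using vwt by simp
      define a where "a = P (l, v)"
      define b where "b = P (l, w)"
      have aB: "a \<in> cball a0 s" and bB: "b \<in> cball a0 s"
        using PA0B0[OF lA0 vB0] PA0B0[OF lA0 wB0] unfolding a_def b_def by auto
      have aU: "a \<in> U" and bU: "b \<in> U" using aB bB sU by blast+
      have PhiPt: "Phi Pt lt vt wt = (1 / norm (vt - wt)) *\<^sub>R (h a - h b)"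
        unfolding Phi_def a_def b_def using PtE[OF ltL vtO] PtE[OF ltL wtO] by (simp add: l_def v_def w_def)
      have nPhi: "norm (Phi P l v w) = norm (a - b) / norm (v - w)"
        unfolding Phi_def a_def b_def by simp
      have nPhit: "norm (Phi Pt lt vt wt) = norm (h a - h b) / norm (vt - wt)"
        unfolding PhiPt by simp
      have ab_le: "norm (a - b) \<le> Mhi * norm (h a - h b)"
      proof -
        have "h a \<in> ball (h a0) t" "h b \<in> ball (h a0) t" using sh aB bB by blast+
        then have "h a \<in> cball (h a0) t" "h b \<in> cball (h a0) t" using ball_subset_cball by blast+
        then have "norm (hi (h a) - hi (h b)) \<le> Mhi * norm (h a - h b)" using Mhi(2) by blast
        then show ?thesis using hi(3) aU bU by simp
      qed
      have gvw: "norm (vt - wt) \<le> Mg * norm (v - w)" using Mg(2) vB0 wB0 gv gw by blast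
      have vwg: "norm (v - w) \<le> Mgi * norm (vt - wt)"
      proof -
        have "vt \<in> ball (g w0) tg" "wt \<in> ball (g w0) tg" using gB0 vB0 wB0 gv gw by blast+
        then have "vt \<in> cball (g w0) tg" "wt \<in> cball (g w0) tg" using ball_subset_cball by blast+
        then have "norm (gi vt - gi wt) \<le> Mgi * norm (vt - wt)" using Mgi(2) by blast
        then show ?thesis unfolding v_def w_def .
      qed
      have Phi_le: "norm (Phi P l v w) \<le> Kphi * norm (Phi Pt lt vt wt)"
      proof -
        have "norm (a - b) / norm (v - w) \<le> Mhi * norm (h a - h b) / norm (v - w)"
          using ab_le nvw by (simp add: divide_right_mono)
        also have "\<dots> = Mhi * norm (h a - h b) * Mg / (Mg * norm (v - w))" using Mg(1) by simp
        also have "\<dots> \<le> Mhi * norm (h a - h b) * Mg / norm (vt - wt)"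
          using gvw nvw nvwt Mg(1) Mhi(1) by (intro divide_left_mono) (auto intro!: mult_pos_pos)
        also have "\<dots> = Kphi * (norm (h a - h b) / norm (vt - wt))" unfolding Kphi_def by simp
        finally show ?thesis unfolding nPhi nPhit .
      qed
      have Phi_small: "norm (Phi P l v w) \<le> Kphi * c"
        using Phi_le small Kphi by (meson mult_left_mono order_trans zero_le_one le_trans)
      have Phi_C: "norm (Phi P l v w) \<le> C" using Phi_small cC by simp
      have lvLO: "(l, v) \<in> \<Lambda> \<times> \<Omega>" and lwLO: "(l, w) \<in> \<Lambda> \<times> \<Omega>" using lL vO wO by auto
      have dv: "((\<lambda>l'. P (l', v)) has_derivative (\<lambda>u. P' (l, v) (u, 0))) (at l)"
        using diff_chain_at[OF has_derivative_Pair[OF has_derivative_ident has_derivative_const] P'd[rule_format, OF lvLO]]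
        by (simp add: o_def)
      have dw: "((\<lambda>l'. P (l', w)) has_derivative (\<lambda>u. P' (l, w) (u, 0))) (at l)"
        using diff_chain_at[OF has_derivative_Pair[OF has_derivative_ident has_derivative_const] P'd[rule_format, OF lwLO]]
        by (simp add: o_def)
      define Dphi where "Dphi = (\<lambda>u. (1 / norm (v - w)) *\<^sub>R (P' (l, v) (u, 0) - P' (l, w) (u, 0)))"
      have dPhi: "((\<lambda>l'. Phi P l' v w) has_derivative Dphi) (at l)"
        unfolding Phi_def Dphi_def by (intro has_derivative_scaleR_right has_derivative_diff dv dw)
      have dfi: "(fi has_derivative fi' lt) (at lt)" using fi'd ltL by blast
      have fil: "fi lt = l" unfolding l_def ..
      have chain: "((\<lambda>l'. h (P (fi l', x))) has_derivative (\<lambda>u. h' (P (l, x)) (P' (l, x) (fi' lt u, 0)))) (at lt)"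
        if "x \<in> \<Omega>" for x
      proof -
        have lx: "(l, x) \<in> \<Lambda> \<times> \<Omega>" using lL that by simp
        have d1: "((\<lambda>l'. (fi l', x)) has_derivative (\<lambda>u. (fi' lt u, 0))) (at lt)"
          by (intro has_derivative_Pair dfi has_derivative_const)
        have d2: "(P has_derivative P' (l, x)) (at (fi lt, x))" using P'd lx fil by simp
        have "P (l, x) \<in> U" using Pim lx by blast
        then have d3: "(h has_derivative h' (P (l, x))) (at (P (fi lt, x)))" using h'd fil by simp
        have d12: "((\<lambda>l'. P (fi l', x)) has_derivative (\<lambda>u. P' (l, x) (fi' lt u, 0))) (at lt)"
          using diff_chain_at[OF d1 d2] by (simp add: o_def)
        from diff_chain_at[OF d12 d3] show ?thesis by (simp add: o_def)
      qed
      define Dt where "Dt = (\<lambda>u. (1 / norm (vt - wt)) *\<^sub>R (h' a (P' (l, v) (fi' lt u, 0)) - h' b (P' (l, w) (fi' lt u, 0))))"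
      have dPt: "((\<lambda>l'. Phi Pt l' vt wt) has_derivative Dt) (at lt)"
      proof -
        have "((\<lambda>l'. (1 / norm (vt - wt)) *\<^sub>R (h (P (fi l', v)) - h (P (fi l', w)))) has_derivative Dt) (at lt)"
          unfolding Dt_def a_def b_def by (intro has_derivative_scaleR_right has_derivative_diff chain vO wO)
        then show ?thesis
        proof (rule has_derivative_transform_within_open[OF _ oLt ltL])
          fix x assume "x \<in> \<Lambda>t"
          then show "(1 / norm (vt - wt)) *\<^sub>R (h (P (fi x, v)) - h (P (fi x, w))) = Phi Pt x vt wt"
            unfolding Phi_def using PtE[OF _ vtO] PtE[OF _ wtO] by (simp add: v_def w_def)
        qed
      qed
      define El where "El = (\<lambda>z. (1 / norm (v - w)) *\<^sub>R (h' a (P' (l, w) (z, 0)) - h' b (P' (l, w) (z, 0))))"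
      define r where "r = norm (v - w) / norm (vt - wt)"
      define Hm where "Hm = matrix (h' a)"
      define D where "D = matrix Dphi"
      define E where "E = matrix El"
      define Jm where "Jm = matrix (fi' lt)"
      have lin_ha: "linear (h' a)" and lin_hb: "linear (h' b)" using h'd aU bU has_derivative_linear by blast+
      have lin_fi: "linear (fi' lt)" using dfi has_derivative_linear by blast
      have lin_Dphi: "linear Dphi" using dPhi has_derivative_linear by blast
      have lin_Dt: "linear Dt" using dPt has_derivative_linear by blast
      have lin_Y: "linear (\<lambda>u. P' (l, w) (u, 0))" using dw has_derivative_linear by blast
      have lin_El: "linear El" unfolding El_def linear_iff
        by (simp add: linear_add[OF lin_Y] linear_cmul[OF lin_Y] linear_add[OF lin_ha] linear_cmul[OF lin_ha]
            linear_add[OF lin_hb] linear_cmul[OF lin_hb] algebra_simps)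
      have mv: "matrix F *v y = F y" if "linear F" for F :: "real^'p \<Rightarrow> real^'q" and y
        using matrix_vector_mul(2)[OF that] by metis
      have jac: "jacobian (\<lambda>l'. Phi Pt l' vt wt) (at lt) = r *\<^sub>R ((Hm ** D + E) ** Jm)"
      proof -
        have "matrix Dt = r *\<^sub>R ((Hm ** D + E) ** Jm)"
          unfolding matrix_eq
        proof
          fix x
          define y where "y = fi' lt x"
          define X where "X = P' (l, v) (y, 0)"
          define Y where "Y = P' (l, w) (y, 0)"
          have "(r *\<^sub>R ((Hm ** D + E) ** Jm)) *v x = r *\<^sub>R (((Hm ** D + E) ** Jm) *v x)"
            by (simp only: scaleR_matrix_vector_assoc)
          also have "\<dots> = r *\<^sub>R ((Hm ** D + E) *v (Jm *v x))"
            by (simp only: matrix_vector_mul_assoc)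
          also have "\<dots> = r *\<^sub>R (Hm *v (D *v (Jm *v x)) + E *v (Jm *v x))"
            by (simp only: matrix_vector_mult_add_rdistrib matrix_vector_mul_assoc[symmetric])
          also have "\<dots> = r *\<^sub>R (h' a (Dphi y) + El y)"
            unfolding Hm_def D_def E_def Jm_def y_def by (simp add: mv lin_ha lin_Dphi lin_El lin_fi)
          also have "h' a (Dphi y) = (1 / norm (v - w)) *\<^sub>R (h' a X - h' a Y)"
            unfolding Dphi_def X_def Y_def by (simp add: linear_cmul[OF lin_ha] linear_diff[OF lin_ha])
          also have "El y = (1 / norm (v - w)) *\<^sub>R (h' a Y - h' b Y)" unfolding El_def Y_def ..
          also have "r *\<^sub>R ((1 / norm (v - w)) *\<^sub>R (h' a X - h' a Y) + (1 / norm (v - w)) *\<^sub>R (h' a Y - h' b Y))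
              = (r * (1 / norm (v - w))) *\<^sub>R (h' a X - h' b Y)"
            by (simp add: scaleR_add_right[symmetric] scaleR_scaleR)
          also have "r * (1 / norm (v - w)) = 1 / norm (vt - wt)" unfolding r_def using nvw by simp
          also have "(1 / norm (vt - wt)) *\<^sub>R (h' a X - h' b Y) = Dt x"
            unfolding Dt_def X_def Y_def y_def ..
          also have "Dt x = matrix Dt *v x" using mv[OF lin_Dt] by simp
          finally show "matrix Dt *v x = (r *\<^sub>R ((Hm ** D + E) ** Jm)) *v x" by simp
        qed
        then show ?thesis using jacobian_eq[OF dPt] by simp
      qed
      have HmHS: "Hm \<in> HS" unfolding HS_def Hm_def using aB by blast
      have JmJS: "Jm \<in> JS" unfolding JS_def Jm_def using lA0 flt by blast
      have rRS: "r \<in> RS"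
      proof -
        have "1 / Mg \<le> r" unfolding r_def using gvw nvw nvwt Mg(1) by (simp add: field_simps)
        moreover have "r \<le> Mgi" unfolding r_def using vwg nvwt by (simp add: field_simps)
        ultimately show ?thesis unfolding RS_def by simp
      qed
      have Dnorm: "norm D \<le> MD" unfolding D_def MD_def
      proof (rule matrix_norm_bound)
        fix j :: 'k
        have jB: "axis j (1::real) \<in> Basis" by simp
        have "norm (Dphi (axis j 1)) = norm (P' (l, v) (axis j 1, 0) - P' (l, w) (axis j 1, 0)) / norm (v - w)"
          unfolding Dphi_def by simp
        also have "\<dots> \<le> BQ * norm (v - w) / norm (v - w)"
          using BQ[OF jB lA0 vB0 wB0] nvw by (simp add: pos_divide_le_eq)
        also have "\<dots> = BQ" using nvw by simp
        finally show "norm (Dphi (axis j 1)) \<le> BQ" .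
      qed
      have Ddet: "C\<^sup>2 \<le> \<bar>det (D ** transpose D)\<bar>"
      proof -
        have "l \<in> A'" "v \<in> B'" "w \<in> B'" using lA0 vB0 wB0 A0A' B0B' by blast+
        then have "C\<^sup>2 \<le> \<bar>det (jacobian (\<lambda>l'. Phi P l' v w) (at l) ** transpose (jacobian (\<lambda>l'. Phi P l' v w) (at l)))\<bar>"
          using C(2) vw Phi_C by blast
        then show ?thesis unfolding D_def jacobian_eq[OF dPhi] .
      qed
      have DDS: "D \<in> DS" unfolding DS_def using Dnorm Ddet by simp
      have Enorm: "norm E \<le> KE * norm (Phi P l v w)" unfolding E_def
      proof -
        have "norm (matrix El) \<le> real CARD('m) * real CARD('k) * (real CARD('m) * Bh * BP * norm (Phi P l v w))"
        proof (rule matrix_norm_bound)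
          fix j :: 'k
          define Y where "Y = P' (l, w) (axis j 1, 0)"
          have nY: "norm Y \<le> BP" using BP(2)[OF lA0 wB0, of "axis j 1"] unfolding Y_def by simp
          have "norm (h' a Y - h' b Y) \<le> (real DIM(real^'m) * (Bh * norm (a - b))) * norm Y"
            by (rule hdiff[OF aB bB])
          also have "\<dots> \<le> (real DIM(real^'m) * (Bh * norm (a - b))) * BP"
            using nY Bh by (intro mult_left_mono) auto
          finally have hY: "norm (h' a Y - h' b Y) \<le> real CARD('m) * Bh * BP * norm (a - b)"
            by (simp add: algebra_simps)
          have "norm (El (axis j 1)) = norm (h' a Y - h' b Y) / norm (v - w)"
            unfolding El_def Y_def by simp
          also have "\<dots> \<le> real CARD('m) * Bh * BP * norm (a - b) / norm (v - w)"
            using hY nvw by (intro divide_right_mono) auto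
          also have "\<dots> = real CARD('m) * Bh * BP * norm (Phi P l v w)" unfolding nPhi by simp
          finally show "norm (El (axis j 1)) \<le> real CARD('m) * Bh * BP * norm (Phi P l v w)" .
        qed
        also have "\<dots> \<le> KE * norm (Phi P l v w)" unfolding KE_def by (simp add: algebra_simps)
        finally show "norm (matrix El) \<le> KE * norm (Phi P l v w)" .
      qed
      have Esmall: "norm E < \<delta>"
      proof -
        have "norm E \<le> KE * (Kphi * c)" using Enorm Phi_small KE by (meson mult_left_mono order_trans zero_le_one le_trans)
        then show ?thesis using cd by simp
      qed
      define z0 where "z0 = (Hm, D, Jm, r, 0 :: real^'k^'m)"
      define z where "z = (Hm, D, Jm, r, E)"
      have z0K: "z0 \<in> K2" unfolding z0_def K2_def using HmHS DDS JmJS rRS by simp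
      have "dist z0 z = norm E" unfolding z0_def z_def by (simp add: dist_Pair_Pair dist_norm)
      then have "z \<in> ball z0 \<delta>" using Esmall by simp
      then have "\<mu> / 2 < Fm z" using \<delta>(2) z0K by blast
      moreover have "Fm z = \<bar>det (jacobian (\<lambda>l'. Phi Pt l' vt wt) (at lt) ** transpose (jacobian (\<lambda>l'. Phi Pt l' vt wt) (at lt)))\<bar>"
        unfolding Fm_def Xf_def z_def jac by simp
      ultimately show "c\<^sup>2 \<le> \<bar>det (jacobian (\<lambda>l'. Phi Pt l' vt wt) (at lt) ** transpose (jacobian (\<lambda>l'. Phi Pt l' vt wt) (at lt)))\<bar>"
        using cmu by simp
    qed
    show "\<exists>A' B'. open A' \<and> open B' \<and> p \<in> A' \<times> B' \<and> A' \<subseteq> \<Lambda>t \<and> B' \<subseteq> \<Omega>t \<and> transversal_on Pt A' B'"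
      by (intro exI[of _ At] exI[of _ Bt] conjI oAt oBt pAB tr) (auto simp: At_def Bt_def)
  qed
  show ?thesis using part1 part2 by blast
qed

end
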